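(* Let $p+q=3$. The Hurwitz algebra $(\mathcal{G}(p,q),\bullet,N)$ is classified by the signature as follows. - It is isomorphic to the octonions $\mathbb{O}$ if $(p,q)=(3,0)$. - It is isomorphic to the split-octonions $\mathbb{O}_s$ if $(p,q)\in\{(2,1),(1,2),(0,3)\}$.
   Context: Let $p,q\ge0$ with $p+q=3$. $\mathcal{G}(p,q)$ is the real Clifford (geometric) algebra generated by an orthonormal basis $e_1,e_2,e_3$ with $e_i^2=\lambda_i\in\{\pm1\}$ (exactly $p$ of them $+1$) and $e_ie_j=-e_je_i$ for $i\neq j$. $\langle x\rangle_k$ is the grade-$k$ part. We write $x_+=\langle x\rangle_0+\langle x\rangle_2$ and $x_-=\langle x\rangle_1+\langle x\rangle_3$. Clifford conjugation $\tilde x$ multiplies grades $0,1,2,3$ by $+1,-1,-1,+1$. Full grade inversion is $x^*=2\langle x\rangle_0-x$. The product is $x\bullet y = x_+y_+ + \widetilde{y_-}x_- + y_-x_+ + x_-\widetilde{y_+}$. The quadratic form $N$ is defined by $x\bullet x^*=N(x)1$, where $x\bullet x^*$ is a real scalar. $(\mathcal{G}(p,q),\bullet,N)$ is a unital 8-dimensional algebra with nondegenerate multiplicative quadratic form $N$, i.e. a Hurwitz algebra. Hurwitz algebras are unital real algebras with a nondegenerate quadratic form $n$ satisfying $n(xy)=n(x)n(y)$; the 8-dimensional ones are $\mathbb{O}$ (octonions, the division case) and $\mathbb{O}_s$ (split-octonions). *)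

theory Defs
  imports "HOL-Analysis.Analysis"
begin

text \<open>Basis blades e_A, A a subset of {e1,e2,e3}, encoded as bool triples
  (membership of e1, e2, e3).  Multivectors are real vectors indexed by blades.\<close>

type_synonym blade = "bool \<times> bool \<times> bool"
type_synonym mv = "real ^ blade"

fun bmem :: "blade \<Rightarrow> nat \<Rightarrow> bool" where
  "bmem (a, b, c) i = (if i = 0 then a else if i = 1 then b else c)"

fun bxor :: "blade \<Rightarrow> blade \<Rightarrow> blade" where
  "bxor (a, b, c) (a', b', c') = (a \<noteq> a', b \<noteq> b', c \<noteq> c')"

definition grade :: "blade \<Rightarrow> nat" where
  "grade A = card {i. i < 3 \<and> bmem A i}"

text \<open>Sign from reordering e_A e_B into canonical order.\<close>
definition bsign :: "blade \<Rightarrow> blade \<Rightarrow> real" where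
  "bsign A B = (-1) ^ card {(i, j). i < 3 \<and> j < i \<and> bmem A i \<and> bmem B j}"

text \<open>Metric factor: product of e_i^2 = sig i over the common generators.\<close>
definition bmetric :: "(nat \<Rightarrow> real) \<Rightarrow> blade \<Rightarrow> blade \<Rightarrow> real" where
  "bmetric sig A B = (\<Prod>i\<in>{i. i < 3 \<and> bmem A i \<and> bmem B i}. sig i)"

definition gp :: "(nat \<Rightarrow> real) \<Rightarrow> mv \<Rightarrow> mv \<Rightarrow> mv" where
  "gp sig x y = (\<chi> C. \<Sum>A\<in>UNIV. \<Sum>B\<in>UNIV.
      if bxor A B = C then bsign A B * bmetric sig A B * (x $ A) * (y $ B) else 0)"

definition mv_one :: mv where
  "mv_one = (\<chi> A. if A = (False, False, False) then 1 else 0)"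

definition gradepart :: "nat \<Rightarrow> mv \<Rightarrow> mv" where
  "gradepart k x = (\<chi> A. if grade A = k then x $ A else 0)"

definition evenpart :: "mv \<Rightarrow> mv" where
  "evenpart x = gradepart 0 x + gradepart 2 x"

definition oddpart :: "mv \<Rightarrow> mv" where
  "oddpart x = gradepart 1 x + gradepart 3 x"

definition cliff_conj :: "mv \<Rightarrow> mv" where
  "cliff_conj x = gradepart 0 x - gradepart 1 x - gradepart 2 x + gradepart 3 x"

definition gstar :: "mv \<Rightarrow> mv" where
  "gstar x = 2 *\<^sub>R gradepart 0 x - x"

definition bprod :: "(nat \<Rightarrow> real) \<Rightarrow> mv \<Rightarrow> mv \<Rightarrow> mv" where
  "bprod sig x y =
     gp sig (evenpart x) (evenpart y)
   + gp sig (cliff_conj (oddpart y)) (oddpart x)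
   + gp sig (oddpart y) (evenpart x)
   + gp sig (oddpart x) (cliff_conj (evenpart y))"

text \<open>N(x) defined by x \<bullet> x* = N(x) 1: the scalar coefficient.\<close>
definition Nform :: "(nat \<Rightarrow> real) \<Rightarrow> mv \<Rightarrow> real" where
  "Nform sig x = bprod sig x (gstar x) $ (False, False, False)"

type_synonym quat = "complex \<times> complex"
type_synonym oct = "quat \<times> quat"

fun qmul :: "quat \<Rightarrow> quat \<Rightarrow> quat" where
  "qmul (a, b) (c, d) = (a * c - cnj d * b, d * a + b * cnj c)"

fun qcnj :: "quat \<Rightarrow> quat" where
  "qcnj (a, b) = (cnj a, - b)"

fun qnorm :: "quat \<Rightarrow> real" where
  "qnorm (a, b) = (cmod a)^2 + (cmod b)^2"

text \<open>Cayley--Dickson doubling of the quaternions with parameter mu: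
  (a,b)(c,d) = (ac + mu * conj(d) b, d a + b conj(c)), norm n(a,b) = n(a) - mu n(b).
  mu = -1 gives the octonions, mu = 1 the split-octonions.\<close>
fun cd_mul :: "real \<Rightarrow> oct \<Rightarrow> oct \<Rightarrow> oct" where
  "cd_mul mu (a, b) (c, d) = (qmul a c + mu *\<^sub>R qmul (qcnj d) b, qmul d a + qmul b (qcnj c))"

fun cd_norm :: "real \<Rightarrow> oct \<Rightarrow> real" where
  "cd_norm mu (a, b) = qnorm a - mu * qnorm b"

definition oct_mul :: "oct \<Rightarrow> oct \<Rightarrow> oct" where "oct_mul = cd_mul (-1)"
definition oct_norm :: "oct \<Rightarrow> real" where "oct_norm = cd_norm (-1)"
definition soct_mul :: "oct \<Rightarrow> oct \<Rightarrow> oct" where "soct_mul = cd_mul 1"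
definition soct_norm :: "oct \<Rightarrow> real" where "soct_norm = cd_norm 1"

definition hurwitz_iso ::
  "('a::real_vector \<Rightarrow> 'a \<Rightarrow> 'a) \<Rightarrow> ('a \<Rightarrow> real) \<Rightarrow>
   ('b::real_vector \<Rightarrow> 'b \<Rightarrow> 'b) \<Rightarrow> ('b \<Rightarrow> real) \<Rightarrow> ('a \<Rightarrow> 'b) \<Rightarrow> bool" where
  "hurwitz_iso mulA nA mulB nB f \<longleftrightarrow>
     linear f \<and> bij f \<and> (\<forall>x y. f (mulA x y) = mulB (f x) (f y)) \<and> (\<forall>x. nB (f x) = nA x)"

end

theory Submission
  imports Defs
begin

lemma UNIV_blade: "(UNIV::blade set) = {(False,False,False),(False,False,True),(False,True,False),(False,True,True),
  (True,False,False),(True,False,True),(True,True,False),(True,True,True)}"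
  by auto

lemma sum_blade: "(\<Sum>A\<in>UNIV. g A) = g (False,False,False) + g (False,False,True) + g (False,True,False) + g (False,True,True)
  + g (True,False,False) + g (True,False,True) + g (True,True,False) + g (True,True,True)"
  by (simp add: UNIV_blade add.assoc)

lemma bsign_eq: "bsign (a,b,c) (a',b',c') = (if b \<and> a' then -1 else 1) * (if c \<and> a' then -1 else 1) * (if c \<and> b' then -1 else 1)"
proof -
  have "{(i, j). i < 3 \<and> j < i \<and> bmem (a,b,c) i \<and> bmem (a',b',c') j} =
     (if b \<and> a' then {(1::nat,0::nat)} else {}) \<union> (if c \<and> a' then {(2,0)} else {}) \<union> (if c \<and> b' then {(2,1)} else {})"
    by (auto simp: less_Suc_eq numeral_3_eq_3 numeral_2_eq_2)
  note eq = this show ?thesis unfolding bsign_def eq by (cases a; cases b; cases c; cases a'; cases b'; cases c') simp_all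
qed

lemma bmetric_eq: "bmetric sig (a,b,c) (a',b',c') = (if a \<and> a' then sig 0 else 1) * (if b \<and> b' then sig 1 else 1) * (if c \<and> c' then sig 2 else 1)"
proof -
  have "{i. i < 3 \<and> bmem (a,b,c) i \<and> bmem (a',b',c') i} =
     (if a \<and> a' then {0::nat} else {}) \<union> (if b \<and> b' then {1} else {}) \<union> (if c \<and> c' then {2} else {})"
    by (auto simp: less_Suc_eq numeral_3_eq_3 numeral_2_eq_2)
  note eq = this show ?thesis unfolding bmetric_def eq by (cases a; cases b; cases c; cases a'; cases b'; cases c') simp_all
qed

lemma grade_eq: "grade (a,b,c) = of_bool a + of_bool b + of_bool c"
proof -
  have "{i. i < 3 \<and> bmem (a,b,c) i} =
     (if a then {0::nat} else {}) \<union> (if b then {1} else {}) \<union> (if c then {2} else {})"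
    by (auto simp: less_Suc_eq numeral_3_eq_3 numeral_2_eq_2)
  note eq = this show ?thesis unfolding grade_def eq by (cases a; cases b; cases c) simp_all
qed

lemmas comp_simps = gp_def sum_blade bsign_eq bmetric_eq grade_eq evenpart_def oddpart_def cliff_conj_def gradepart_def gstar_def mv_one_def

lemma all_blade: "(\<forall>A::blade. P A) \<longleftrightarrow> P (False,False,False) \<and> P (False,False,True) \<and> P (False,True,False) \<and> P (False,True,True)
  \<and> P (True,False,False) \<and> P (True,False,True) \<and> P (True,True,False) \<and> P (True,True,True)"
proof
  assume "\<forall>A. P A" then show "P (False,False,False) \<and> P (False,False,True) \<and> P (False,True,False) \<and> P (False,True,True)
  \<and> P (True,False,False) \<and> P (True,False,True) \<and> P (True,True,False) \<and> P (True,True,True)" by simp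
next
  assume H: "P (False,False,False) \<and> P (False,False,True) \<and> P (False,True,False) \<and> P (False,True,True)
  \<and> P (True,False,False) \<and> P (True,False,True) \<and> P (True,True,False) \<and> P (True,True,True)"
  show "\<forall>A. P A"
  proof
    fix A :: blade
    obtain a b c where A: "A = (a,b,c)" by (cases A) auto
    show "P A" unfolding A using H by (cases a; cases b; cases c) simp_all
  qed
qed

lemma bijI'_from_inv: assumes "\<forall>x. g (f x) = x" "\<forall>z. f (g z) = z" shows "bij f"
  by (metis assms bijI')

lemma qn: "qnorm (Complex a b, Complex c d) = a*a+b*b+c*c+d*d"
  unfolding qnorm.simps cmod_power2 by (simp add: power2_eq_square)

lemma norm_C: "cd_norm mu ((Complex a b, Complex c d),(Complex e f, Complex g h)) = a*a+b*b+c*c+d*d - mu*(e*e+f*f+g*g+h*h)"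
  by (simp only: cd_norm.simps qn)

lemma card3: "{i::nat. i < 3 \<and> P i} = (if P 0 then {0} else {}) \<union> (if P 1 then {1} else {}) \<union> (if P 2 then {2} else {})"
proof (rule set_eqI)
  fix i :: nat
  have "i < 3 \<longleftrightarrow> i = 0 \<or> i = 1 \<or> i = 2" by arith
  then show "i \<in> {i::nat. i < 3 \<and> P i} \<longleftrightarrow> i \<in> (if P 0 then {0} else {}) \<union> (if P 1 then {1} else {}) \<union> (if P 2 then {2} else {})"
    by auto
qed

lemma iso_ppp:
  assumes "sig 0 = 1" "sig (Suc 0) = 1" "sig 2 = 1"
  shows "\<exists>f. hurwitz_iso (bprod sig) (Nform sig) (cd_mul (-1)) (cd_norm (-1)) f"
proof -
  have s1: "sig 1 = 1" using assms by simp
  define f where "f = (\<lambda>x::mv. ((Complex (x $ (False,False,False)) (x $ (False,False,True)), Complex (x $ (False,True,False)) (- x $ (False,True,True))), (Complex (x $ (True,False,False)) (- x $ (True,False,True)), Complex (- x $ (True,True,False)) (- x $ (True,True,True)))))"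
  define g where "g = (\<lambda>z::oct. vec_lambda (\<lambda>A::blade. if A = (False,False,False) then Re (fst (fst z)) else if A = (False,False,True) then Im (fst (fst z)) else if A = (False,True,False) then Re (snd (fst z)) else if A = (False,True,True) then - Im (snd (fst z)) else if A = (True,False,False) then Re (fst (snd z)) else if A = (True,False,True) then - Im (fst (snd z)) else if A = (True,True,False) then - Re (snd (snd z)) else - Im (snd (snd z))))"
  have "hurwitz_iso (bprod sig) (Nform sig) (cd_mul (-1)) (cd_norm (-1)) f"
    unfolding hurwitz_iso_def
  proof (intro conjI allI)
    show "linear f"
      by (rule linearI) (simp_all add: f_def complex_eq_iff algebra_simps)
    have gf: "\<forall>x. g (f x) = x" by (simp add: f_def g_def vec_eq_iff all_blade)
    have fg: "\<forall>z. f (g z) = z" by (simp add: f_def g_def prod_eq_iff complex_eq_iff)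
    show "bij f" by (rule bijI'_from_inv[OF gf fg])
    fix x y
    show "f (bprod sig x y) = cd_mul (-1) (f x) (f y)"
      unfolding f_def bprod_def
      by (simp add: comp_simps assms s1 complex_eq_iff)
    show "cd_norm (-1) (f x) = Nform sig x"
      unfolding f_def norm_C Nform_def bprod_def
      by (simp add: comp_simps assms s1)
  qed
  then show ?thesis by blast
qed

lemma iso_ppm:
  assumes "sig 0 = 1" "sig (Suc 0) = 1" "sig 2 = -1"
  shows "\<exists>f. hurwitz_iso (bprod sig) (Nform sig) (cd_mul (1)) (cd_norm (1)) f"
proof -
  have s1: "sig 1 = 1" using assms by simp
  define f where "f = (\<lambda>x::mv. ((Complex (x $ (False,False,False)) (x $ (False,True,False)), Complex (x $ (True,False,False)) (- x $ (True,True,False))), (Complex (x $ (False,False,True)) (x $ (False,True,True)), Complex (x $ (True,False,True)) (- x $ (True,True,True)))))"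
  define g where "g = (\<lambda>z::oct. vec_lambda (\<lambda>A::blade. if A = (False,False,False) then Re (fst (fst z)) else if A = (False,False,True) then Re (fst (snd z)) else if A = (False,True,False) then Im (fst (fst z)) else if A = (False,True,True) then Im (fst (snd z)) else if A = (True,False,False) then Re (snd (fst z)) else if A = (True,False,True) then Re (snd (snd z)) else if A = (True,True,False) then - Im (snd (fst z)) else - Im (snd (snd z))))"
  have "hurwitz_iso (bprod sig) (Nform sig) (cd_mul (1)) (cd_norm (1)) f"
    unfolding hurwitz_iso_def
  proof (intro conjI allI)
    show "linear f"
      by (rule linearI) (simp_all add: f_def complex_eq_iff algebra_simps)
    have gf: "\<forall>x. g (f x) = x" by (simp add: f_def g_def vec_eq_iff all_blade)
    have fg: "\<forall>z. f (g z) = z" by (simp add: f_def g_def prod_eq_iff complex_eq_iff)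
    show "bij f" by (rule bijI'_from_inv[OF gf fg])
    fix x y
    show "f (bprod sig x y) = cd_mul (1) (f x) (f y)"
      unfolding f_def bprod_def
      by (simp add: comp_simps assms s1 complex_eq_iff)
    show "cd_norm (1) (f x) = Nform sig x"
      unfolding f_def norm_C Nform_def bprod_def
      by (simp add: comp_simps assms s1)
  qed
  then show ?thesis by blast
qed

lemma iso_pmp:
  assumes "sig 0 = 1" "sig (Suc 0) = -1" "sig 2 = 1"
  shows "\<exists>f. hurwitz_iso (bprod sig) (Nform sig) (cd_mul (1)) (cd_norm (1)) f"
proof -
  have s1: "sig 1 = -1" using assms by simp
  define f where "f = (\<lambda>x::mv. ((Complex (x $ (False,False,False)) (x $ (False,False,True)), Complex (x $ (True,False,False)) (- x $ (True,False,True))), (Complex (x $ (False,True,False)) (- x $ (False,True,True)), Complex (x $ (True,True,False)) (x $ (True,True,True)))))"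
  define g where "g = (\<lambda>z::oct. vec_lambda (\<lambda>A::blade. if A = (False,False,False) then Re (fst (fst z)) else if A = (False,False,True) then Im (fst (fst z)) else if A = (False,True,False) then Re (fst (snd z)) else if A = (False,True,True) then - Im (fst (snd z)) else if A = (True,False,False) then Re (snd (fst z)) else if A = (True,False,True) then - Im (snd (fst z)) else if A = (True,True,False) then Re (snd (snd z)) else Im (snd (snd z))))"
  have "hurwitz_iso (bprod sig) (Nform sig) (cd_mul (1)) (cd_norm (1)) f"
    unfolding hurwitz_iso_def
  proof (intro conjI allI)
    show "linear f"
      by (rule linearI) (simp_all add: f_def complex_eq_iff algebra_simps)
    have gf: "\<forall>x. g (f x) = x" by (simp add: f_def g_def vec_eq_iff all_blade)
    have fg: "\<forall>z. f (g z) = z" by (simp add: f_def g_def prod_eq_iff complex_eq_iff)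
    show "bij f" by (rule bijI'_from_inv[OF gf fg])
    fix x y
    show "f (bprod sig x y) = cd_mul (1) (f x) (f y)"
      unfolding f_def bprod_def
      by (simp add: comp_simps assms s1 complex_eq_iff)
    show "cd_norm (1) (f x) = Nform sig x"
      unfolding f_def norm_C Nform_def bprod_def
      by (simp add: comp_simps assms s1)
  qed
  then show ?thesis by blast
qed

lemma iso_pmm:
  assumes "sig 0 = 1" "sig (Suc 0) = -1" "sig 2 = -1"
  shows "\<exists>f. hurwitz_iso (bprod sig) (Nform sig) (cd_mul (1)) (cd_norm (1)) f"
proof -
  have s1: "sig 1 = -1" using assms by simp
  define f where "f = (\<lambda>x::mv. ((Complex (x $ (False,False,False)) (x $ (False,True,True)), Complex (x $ (True,False,False)) (x $ (True,True,True))), (Complex (x $ (False,False,True)) (x $ (False,True,False)), Complex (x $ (True,False,True)) (x $ (True,True,False)))))"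
  define g where "g = (\<lambda>z::oct. vec_lambda (\<lambda>A::blade. if A = (False,False,False) then Re (fst (fst z)) else if A = (False,False,True) then Re (fst (snd z)) else if A = (False,True,False) then Im (fst (snd z)) else if A = (False,True,True) then Im (fst (fst z)) else if A = (True,False,False) then Re (snd (fst z)) else if A = (True,False,True) then Re (snd (snd z)) else if A = (True,True,False) then Im (snd (snd z)) else Im (snd (fst z))))"
  have "hurwitz_iso (bprod sig) (Nform sig) (cd_mul (1)) (cd_norm (1)) f"
    unfolding hurwitz_iso_def
  proof (intro conjI allI)
    show "linear f"
      by (rule linearI) (simp_all add: f_def complex_eq_iff algebra_simps)
    have gf: "\<forall>x. g (f x) = x" by (simp add: f_def g_def vec_eq_iff all_blade)
    have fg: "\<forall>z. f (g z) = z" by (simp add: f_def g_def prod_eq_iff complex_eq_iff)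
    show "bij f" by (rule bijI'_from_inv[OF gf fg])
    fix x y
    show "f (bprod sig x y) = cd_mul (1) (f x) (f y)"
      unfolding f_def bprod_def
      by (simp add: comp_simps assms s1 complex_eq_iff)
    show "cd_norm (1) (f x) = Nform sig x"
      unfolding f_def norm_C Nform_def bprod_def
      by (simp add: comp_simps assms s1)
  qed
  then show ?thesis by blast
qed

lemma iso_mpp:
  assumes "sig 0 = -1" "sig (Suc 0) = 1" "sig 2 = 1"
  shows "\<exists>f. hurwitz_iso (bprod sig) (Nform sig) (cd_mul (1)) (cd_norm (1)) f"
proof -
  have s1: "sig 1 = 1" using assms by simp
  define f where "f = (\<lambda>x::mv. ((Complex (x $ (False,False,False)) (x $ (False,False,True)), Complex (x $ (False,True,False)) (- x $ (False,True,True))), (Complex (x $ (True,False,False)) (- x $ (True,False,True)), Complex (- x $ (True,True,False)) (- x $ (True,True,True)))))"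
  define g where "g = (\<lambda>z::oct. vec_lambda (\<lambda>A::blade. if A = (False,False,False) then Re (fst (fst z)) else if A = (False,False,True) then Im (fst (fst z)) else if A = (False,True,False) then Re (snd (fst z)) else if A = (False,True,True) then - Im (snd (fst z)) else if A = (True,False,False) then Re (fst (snd z)) else if A = (True,False,True) then - Im (fst (snd z)) else if A = (True,True,False) then - Re (snd (snd z)) else - Im (snd (snd z))))"
  have "hurwitz_iso (bprod sig) (Nform sig) (cd_mul (1)) (cd_norm (1)) f"
    unfolding hurwitz_iso_def
  proof (intro conjI allI)
    show "linear f"
      by (rule linearI) (simp_all add: f_def complex_eq_iff algebra_simps)
    have gf: "\<forall>x. g (f x) = x" by (simp add: f_def g_def vec_eq_iff all_blade)
    have fg: "\<forall>z. f (g z) = z" by (simp add: f_def g_def prod_eq_iff complex_eq_iff)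
    show "bij f" by (rule bijI'_from_inv[OF gf fg])
    fix x y
    show "f (bprod sig x y) = cd_mul (1) (f x) (f y)"
      unfolding f_def bprod_def
      by (simp add: comp_simps assms s1 complex_eq_iff)
    show "cd_norm (1) (f x) = Nform sig x"
      unfolding f_def norm_C Nform_def bprod_def
      by (simp add: comp_simps assms s1)
  qed
  then show ?thesis by blast
qed

lemma iso_mpm:
  assumes "sig 0 = -1" "sig (Suc 0) = 1" "sig 2 = -1"
  shows "\<exists>f. hurwitz_iso (bprod sig) (Nform sig) (cd_mul (1)) (cd_norm (1)) f"
proof -
  have s1: "sig 1 = 1" using assms by simp
  define f where "f = (\<lambda>x::mv. ((Complex (x $ (False,False,False)) (x $ (False,True,False)), Complex (x $ (True,False,True)) (x $ (True,True,True))), (Complex (x $ (False,False,True)) (x $ (False,True,True)), Complex (x $ (True,False,False)) (x $ (True,True,False)))))"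
  define g where "g = (\<lambda>z::oct. vec_lambda (\<lambda>A::blade. if A = (False,False,False) then Re (fst (fst z)) else if A = (False,False,True) then Re (fst (snd z)) else if A = (False,True,False) then Im (fst (fst z)) else if A = (False,True,True) then Im (fst (snd z)) else if A = (True,False,False) then Re (snd (snd z)) else if A = (True,False,True) then Re (snd (fst z)) else if A = (True,True,False) then Im (snd (snd z)) else Im (snd (fst z))))"
  have "hurwitz_iso (bprod sig) (Nform sig) (cd_mul (1)) (cd_norm (1)) f"
    unfolding hurwitz_iso_def
  proof (intro conjI allI)
    show "linear f"
      by (rule linearI) (simp_all add: f_def complex_eq_iff algebra_simps)
    have gf: "\<forall>x. g (f x) = x" by (simp add: f_def g_def vec_eq_iff all_blade)
    have fg: "\<forall>z. f (g z) = z" by (simp add: f_def g_def prod_eq_iff complex_eq_iff)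
    show "bij f" by (rule bijI'_from_inv[OF gf fg])
    fix x y
    show "f (bprod sig x y) = cd_mul (1) (f x) (f y)"
      unfolding f_def bprod_def
      by (simp add: comp_simps assms s1 complex_eq_iff)
    show "cd_norm (1) (f x) = Nform sig x"
      unfolding f_def norm_C Nform_def bprod_def
      by (simp add: comp_simps assms s1)
  qed
  then show ?thesis by blast
qed

lemma iso_mmp:
  assumes "sig 0 = -1" "sig (Suc 0) = -1" "sig 2 = 1"
  shows "\<exists>f. hurwitz_iso (bprod sig) (Nform sig) (cd_mul (1)) (cd_norm (1)) f"
proof -
  have s1: "sig 1 = -1" using assms by simp
  define f where "f = (\<lambda>x::mv. ((Complex (x $ (False,False,False)) (x $ (False,False,True)), Complex (x $ (True,True,False)) (- x $ (True,True,True))), (Complex (x $ (False,True,False)) (- x $ (False,True,True)), Complex (x $ (True,False,False)) (x $ (True,False,True)))))"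
  define g where "g = (\<lambda>z::oct. vec_lambda (\<lambda>A::blade. if A = (False,False,False) then Re (fst (fst z)) else if A = (False,False,True) then Im (fst (fst z)) else if A = (False,True,False) then Re (fst (snd z)) else if A = (False,True,True) then - Im (fst (snd z)) else if A = (True,False,False) then Re (snd (snd z)) else if A = (True,False,True) then Im (snd (snd z)) else if A = (True,True,False) then Re (snd (fst z)) else - Im (snd (fst z))))"
  have "hurwitz_iso (bprod sig) (Nform sig) (cd_mul (1)) (cd_norm (1)) f"
    unfolding hurwitz_iso_def
  proof (intro conjI allI)
    show "linear f"
      by (rule linearI) (simp_all add: f_def complex_eq_iff algebra_simps)
    have gf: "\<forall>x. g (f x) = x" by (simp add: f_def g_def vec_eq_iff all_blade)
    have fg: "\<forall>z. f (g z) = z" by (simp add: f_def g_def prod_eq_iff complex_eq_iff)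
    show "bij f" by (rule bijI'_from_inv[OF gf fg])
    fix x y
    show "f (bprod sig x y) = cd_mul (1) (f x) (f y)"
      unfolding f_def bprod_def
      by (simp add: comp_simps assms s1 complex_eq_iff)
    show "cd_norm (1) (f x) = Nform sig x"
      unfolding f_def norm_C Nform_def bprod_def
      by (simp add: comp_simps assms s1)
  qed
  then show ?thesis by blast
qed

lemma iso_mmm:
  assumes "sig 0 = -1" "sig (Suc 0) = -1" "sig 2 = -1"
  shows "\<exists>f. hurwitz_iso (bprod sig) (Nform sig) (cd_mul (1)) (cd_norm (1)) f"
proof -
  have s1: "sig 1 = -1" using assms by simp
  define f where "f = (\<lambda>x::mv. ((Complex (x $ (False,False,False)) (x $ (False,True,True)), Complex (x $ (True,False,True)) (- x $ (True,True,False))), (Complex (x $ (False,False,True)) (x $ (False,True,False)), Complex (x $ (True,False,False)) (- x $ (True,True,True)))))"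
  define g where "g = (\<lambda>z::oct. vec_lambda (\<lambda>A::blade. if A = (False,False,False) then Re (fst (fst z)) else if A = (False,False,True) then Re (fst (snd z)) else if A = (False,True,False) then Im (fst (snd z)) else if A = (False,True,True) then Im (fst (fst z)) else if A = (True,False,False) then Re (snd (snd z)) else if A = (True,False,True) then Re (snd (fst z)) else if A = (True,True,False) then - Im (snd (fst z)) else - Im (snd (snd z))))"
  have "hurwitz_iso (bprod sig) (Nform sig) (cd_mul (1)) (cd_norm (1)) f"
    unfolding hurwitz_iso_def
  proof (intro conjI allI)
    show "linear f"
      by (rule linearI) (simp_all add: f_def complex_eq_iff algebra_simps)
    have gf: "\<forall>x. g (f x) = x" by (simp add: f_def g_def vec_eq_iff all_blade)
    have fg: "\<forall>z. f (g z) = z" by (simp add: f_def g_def prod_eq_iff complex_eq_iff)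
    show "bij f" by (rule bijI'_from_inv[OF gf fg])
    fix x y
    show "f (bprod sig x y) = cd_mul (1) (f x) (f y)"
      unfolding f_def bprod_def
      by (simp add: comp_simps assms s1 complex_eq_iff)
    show "cd_norm (1) (f x) = Nform sig x"
      unfolding f_def norm_C Nform_def bprod_def
      by (simp add: comp_simps assms s1)
  qed
  then show ?thesis by blast
qed

theorem mainTheorem5:
  fixes sig :: "nat \<Rightarrow> real" and p q :: nat
  assumes "\<forall>i<3. sig i = 1 \<or> sig i = -1"
    and "p = card {i. i < 3 \<and> sig i = 1}"
    and "q = card {i. i < 3 \<and> sig i = -1}"
  shows "((p, q) = (3, 0) \<longrightarrow>
            (\<exists>f. hurwitz_iso (bprod sig) (Nform sig) oct_mul oct_norm f))
       \<and> ((p, q) \<in> {(2, 1), (1, 2), (0, 3)} \<longrightarrow>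
            (\<exists>f. hurwitz_iso (bprod sig) (Nform sig) soct_mul soct_norm f))"
proof -
  have s0: "sig 0 = 1 \<or> sig 0 = -1" and s1: "sig (Suc 0) = 1 \<or> sig (Suc 0) = -1"
    and s2: "sig 2 = 1 \<or> sig 2 = -1" using assms(1) by auto
  from s0 s1 s2 consider (ppp) "sig 0 = 1" "sig (Suc 0) = 1" "sig 2 = 1" | (ppm) "sig 0 = 1" "sig (Suc 0) = 1" "sig 2 = -1" | (pmp) "sig 0 = 1" "sig (Suc 0) = -1" "sig 2 = 1" | (pmm) "sig 0 = 1" "sig (Suc 0) = -1" "sig 2 = -1" | (mpp) "sig 0 = -1" "sig (Suc 0) = 1" "sig 2 = 1" | (mpm) "sig 0 = -1" "sig (Suc 0) = 1" "sig 2 = -1" | (mmp) "sig 0 = -1" "sig (Suc 0) = -1" "sig 2 = 1" | (mmm) "sig 0 = -1" "sig (Suc 0) = -1" "sig 2 = -1"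
    by blast
  then show ?thesis
  proof cases
    case ppp
    have pq: "p = 3" "q = 0" using ppp unfolding assms(2,3) card3 by (simp_all add: One_nat_def)
    show ?thesis using iso_ppp[OF ppp] unfolding pq oct_mul_def oct_norm_def soct_mul_def soct_norm_def by simp
  next
    case ppm
    have pq: "p = 2" "q = 1" using ppm unfolding assms(2,3) card3 by (simp_all add: One_nat_def)
    show ?thesis using iso_ppm[OF ppm] unfolding pq oct_mul_def oct_norm_def soct_mul_def soct_norm_def by simp
  next
    case pmp
    have pq: "p = 2" "q = 1" using pmp unfolding assms(2,3) card3 by (simp_all add: One_nat_def)
    show ?thesis using iso_pmp[OF pmp] unfolding pq oct_mul_def oct_norm_def soct_mul_def soct_norm_def by simp
  next
    case pmm
    have pq: "p = 1" "q = 2" using pmm unfolding assms(2,3) card3 by (simp_all add: One_nat_def)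
    show ?thesis using iso_pmm[OF pmm] unfolding pq oct_mul_def oct_norm_def soct_mul_def soct_norm_def by simp
  next
    case mpp
    have pq: "p = 2" "q = 1" using mpp unfolding assms(2,3) card3 by (simp_all add: One_nat_def)
    show ?thesis using iso_mpp[OF mpp] unfolding pq oct_mul_def oct_norm_def soct_mul_def soct_norm_def by simp
  next
    case mpm
    have pq: "p = 1" "q = 2" using mpm unfolding assms(2,3) card3 by (simp_all add: One_nat_def)
    show ?thesis using iso_mpm[OF mpm] unfolding pq oct_mul_def oct_norm_def soct_mul_def soct_norm_def by simp
  next
    case mmp
    have pq: "p = 1" "q = 2" using mmp unfolding assms(2,3) card3 by (simp_all add: One_nat_def)
    show ?thesis using iso_mmp[OF mmp] unfolding pq oct_mul_def oct_norm_def soct_mul_def soct_norm_def by simp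
  next
    case mmm
    have pq: "p = 0" "q = 3" using mmm unfolding assms(2,3) card3 by (simp_all add: One_nat_def)
    show ?thesis using iso_mmm[OF mmm] unfolding pq oct_mul_def oct_norm_def soct_mul_def soct_norm_def by simp
  qed
qed

end
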